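(* Let $n \geq 1$ and $m \geq 3$ be integers. The corona graph $P_n \circ C_m$ is a total edge product cordial graph.
   Context: All graphs are finite and simple. $P_k$ denotes the path on $k$ vertices and $C_k$ the cycle on $k$ vertices. For graphs $G$ and $H$ with $V(G)=\{u_1,\dots,u_n\}$, the corona graph $G \circ H$ is obtained by taking one copy of $G$ and $n$ disjoint copies $H^1,\dots,H^n$ of $H$, and joining each vertex $u_i$ by an edge to every vertex of $H^i$. Given an edge labeling $f^*: E(G) \to \{0,1\}$, the induced vertex labeling $f: V(G)\to\{0,1\}$ is $f(v) = \prod\{f^*(uv) : uv \in E(G)\}$ (product of the labels of edges incident to $v$). Let $v_f(i)$ be the number of vertices with $f(v)=i$ and $e_f(i)$ the number of edges with $f^*(e)=i$, for $i=0,1$. The labeling $f^*$ is a total edge product cordial labeling if $|(v_f(0)+e_f(0)) - (v_f(1)+e_f(1))| \leq 1$, and a graph is total edge product cordial if it admits such a labeling. *)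

theory Defs
  imports Main
begin

type_synonym 'a graph = "'a set \<times> 'a set set"

definition simple_graph :: "'a graph \<Rightarrow> bool" where
  "simple_graph G \<longleftrightarrow> finite (fst G) \<and> (\<forall>e \<in> snd G. e \<subseteq> fst G \<and> card e = 2)"

definition path_graph :: "nat \<Rightarrow> nat graph" where
  "path_graph k = ({..<k}, {{i, Suc i} | i. Suc i < k})"

text \<open>Cycle C_k on vertices 0..k-1 (meaningful for k \<ge> 3).\<close>
definition cycle_graph :: "nat \<Rightarrow> nat graph" where
  "cycle_graph k = ({..<k}, {{i, (Suc i) mod k} | i. i < k})"

text \<open>Corona G o H: vertex u of G is represented by Inl u, and vertex w of the copy H^u
  attached to u is represented by Inr (u, w).\<close>
definition corona :: "'a graph \<Rightarrow> 'b graph \<Rightarrow> ('a + 'a \<times> 'b) graph" where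
  "corona G H =
    (Inl ` fst G \<union> {Inr (u, w) | u w. u \<in> fst G \<and> w \<in> fst H},
     (\<lambda>e. Inl ` e) ` snd G
     \<union> {{Inr (u, w1), Inr (u, w2)} | u w1 w2. u \<in> fst G \<and> {w1, w2} \<in> snd H}
     \<union> {{Inl u, Inr (u, w)} | u w. u \<in> fst G \<and> w \<in> fst H})"

definition induced_vertex_label :: "'a graph \<Rightarrow> ('a set \<Rightarrow> nat) \<Rightarrow> 'a \<Rightarrow> nat" where
  "induced_vertex_label G fs v = (\<Prod>e \<in> {e \<in> snd G. v \<in> e}. fs e)"

definition total_edge_product_cordial_labeling :: "'a graph \<Rightarrow> ('a set \<Rightarrow> nat) \<Rightarrow> bool" where
  "total_edge_product_cordial_labeling G fs \<longleftrightarrow>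
     (\<forall>e \<in> snd G. fs e \<in> {0, 1}) \<and>
     (let f = induced_vertex_label G fs;
          vf = (\<lambda>i. card {v \<in> fst G. f v = i});
          ef = (\<lambda>i. card {e \<in> snd G. fs e = i})
      in \<bar>(int (vf 0) + int (ef 0)) - (int (vf 1) + int (ef 1))\<bar> \<le> 1)"

definition total_edge_product_cordial :: "'a graph \<Rightarrow> bool" where
  "total_edge_product_cordial G \<longleftrightarrow> (\<exists>fs. total_edge_product_cordial_labeling G fs)"

end

theory Submission
  imports Defs
begin

definition PE :: "nat \<Rightarrow> (nat + nat \<times> nat) set set" where
  "PE k = (\<lambda>i. {Inl i, Inl (Suc i)}) ` {..<k}"
definition CE :: "nat \<Rightarrow> nat \<Rightarrow> nat \<Rightarrow> (nat + nat \<times> nat) set set" where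
  "CE n m r = (\<lambda>(u,i). {Inr (u,i), Inr (u, Suc i mod m)}) ` ({..<n} \<times> {..<r})"
definition SE :: "nat \<Rightarrow> nat \<Rightarrow> (nat + nat \<times> nat) set set" where
  "SE n r = (\<lambda>(u,w). {Inl u, Inr (u,w)}) ` ({..<n} \<times> {..<r})"

lemma corona_V:
  "fst (corona (path_graph n) (cycle_graph m)) = Inl ` {..<n} \<union> Inr ` ({..<n} \<times> {..<m})"
  by (auto simp: corona_def path_graph_def cycle_graph_def)

lemma corona_E:
  "snd (corona (path_graph n) (cycle_graph m)) = PE (n-1) \<union> CE n m m \<union> SE n m"
proof -
  have 1: "(\<lambda>e. Inl ` e) ` {{i, Suc i} | i. Suc i < n} = PE (n-1)"
  proof
    show "(\<lambda>e. Inl ` e) ` {{i, Suc i} | i. Suc i < n} \<subseteq> PE (n-1)"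
      unfolding PE_def by auto
    show "PE (n-1) \<subseteq> (\<lambda>e. Inl ` e) ` {{i, Suc i} | i. Suc i < n}"
    proof
      fix e assume "e \<in> PE (n-1)"
      then obtain i where "i < n - 1" "e = {Inl i, Inl (Suc i)}" unfolding PE_def by auto
      then show "e \<in> (\<lambda>e. Inl ` e) ` {{i, Suc i} | i. Suc i < n}"
        by (intro image_eqI[of _ _ "{i, Suc i}"]) auto
    qed
  qed
  have 2: "{{Inr (u, w1), Inr (u, w2)} | u w1 w2. u \<in> {..<n} \<and> {w1, w2} \<in> {{i, (Suc i) mod m} | i. i < m}} = CE n m m"
    unfolding CE_def by (auto simp: image_iff doubleton_eq_iff)
  have 3: "{{Inl u, Inr (u, w)} | u w. u \<in> {..<n} \<and> w \<in> {..<m}} = SE n m"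
    unfolding SE_def by auto
  show ?thesis unfolding corona_def path_graph_def cycle_graph_def using 1 2 3 by simp
qed

lemma card_PE: "card (PE k) = k"
proof -
  have "inj_on (\<lambda>i. {Inl i, Inl (Suc i)} :: (nat + nat \<times> nat) set) {..<k}"
    by (auto simp: inj_on_def doubleton_eq_iff)
  then show ?thesis unfolding PE_def by (simp add: card_image)
qed

lemma card_SE: "card (SE n r) = n * r"
proof -
  have "inj_on (\<lambda>(u,w). {Inl u, Inr (u,w)} :: (nat + nat \<times> nat) set) ({..<n} \<times> {..<r})"
    by (auto simp: inj_on_def doubleton_eq_iff)
  then show ?thesis unfolding SE_def by (simp add: card_image card_cartesian_product)
qed

lemma suc_mod: "i < m \<Longrightarrow> Suc i mod m = (if Suc i = m then 0 else Suc i)"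
  by auto

lemma card_CE: assumes "m \<ge> 3" "r \<le> m" shows "card (CE n m r) = n * r"
proof -
  have "inj_on (\<lambda>(u,i). {Inr (u,i), Inr (u, Suc i mod m)} :: (nat + nat \<times> nat) set) ({..<n} \<times> {..<r})"
    unfolding inj_on_def
  proof (clarsimp)
    fix u i u' i'
    assume "i < r" "i' < r"
      and e: "{Inr (u, i), Inr (u, Suc i mod m)} = {Inr (u', i'), Inr (u', Suc i' mod m)}"
    have im: "i < m" "i' < m" using \<open>i < r\<close> \<open>i' < r\<close> assms by auto
    from e have "u = u' \<and> (i = i' \<or> (i = Suc i' mod m \<and> Suc i mod m = i'))"
      by (auto simp: doubleton_eq_iff)
    then show "u = u' \<and> i = i'"
      using im assms by (auto simp: suc_mod split: if_splits)
  qed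
  then show ?thesis unfolding CE_def by (simp add: card_image card_cartesian_product)
qed

lemma PE_mono: "a \<le> b \<Longrightarrow> PE a \<subseteq> PE b"
  unfolding PE_def by auto
lemma CE_mono: "a \<le> b \<Longrightarrow> CE n m a \<subseteq> CE n m b"
  unfolding CE_def by auto
lemma SE_mono: "a \<le> b \<Longrightarrow> SE n a \<subseteq> SE n b"
  unfolding SE_def by auto

lemma disj: "PE a \<inter> CE n m r = {}" "PE a \<inter> SE n s = {}" "CE n m r \<inter> SE n s = {}"
  unfolding PE_def CE_def SE_def by (auto simp: doubleton_eq_iff)

lemma finite_all: "finite (PE a)" "finite (CE n m r)" "finite (SE n s)"
  unfolding PE_def CE_def SE_def by auto

lemma card3: "card (PE a \<union> CE n m r \<union> SE n s) = card (PE a) + card (CE n m r) + card (SE n s)"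
  using disj finite_all
  by (simp add: card_Un_disjoint Int_Un_distrib2)

lemma ivl:
  assumes "finite E" "Z \<subseteq> E"
  shows "induced_vertex_label (V, E) (\<lambda>e. if e \<in> Z then 0 else 1) v = (if \<exists>e\<in>Z. v \<in> e then 0 else 1)"
proof (cases "\<exists>e\<in>Z. v \<in> e")
  case True
  then obtain e where "e \<in> Z" "v \<in> e" by blast
  then have "e \<in> {e \<in> E. v \<in> e}" using assms by auto
  moreover have "finite {e \<in> E. v \<in> e}" using assms by auto
  ultimately have "(\<Prod>e \<in> {e \<in> E. v \<in> e}. (if e \<in> Z then 0 else 1::nat)) = 0"
    using \<open>e \<in> Z\<close> by (intro prod_zero) auto
  then show ?thesis using True unfolding induced_vertex_label_def by simp
next
  case False
  then have "(\<Prod>e \<in> {e \<in> E. v \<in> e}. (if e \<in> Z then 0 else 1::nat)) = 1"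
    by (intro prod.neutral) auto
  then show ?thesis using False unfolding induced_vertex_label_def by simp
qed

lemma zero_vertices:
  assumes "1 \<le> j" "j < m" "1 \<le> s" "s \<le> Suc j" "p < n"
  shows "{v \<in> Inl ` {..<n} \<union> Inr ` ({..<n} \<times> {..<m}). \<exists>e\<in>PE p \<union> CE n m j \<union> SE n s. v \<in> e}
         = Inl ` {..<n} \<union> Inr ` ({..<n} \<times> {..j})" (is "?L = ?R")
proof
  show "?L \<subseteq> ?R"
    using assms unfolding PE_def CE_def SE_def by (auto simp: suc_mod split: if_splits)
  show "?R \<subseteq> ?L"
  proof
    fix v assume "v \<in> ?R"
    then consider (a) u where "u < n" "v = Inl u" | (b) u w where "u < n" "w \<le> j" "v = Inr (u, w)"
      by auto
    then show "v \<in> ?L"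
    proof cases
      case a
      then have "{Inl u, Inr (u, 0)} \<in> SE n s" using assms unfolding SE_def by force
      then show ?thesis using a by blast
    next
      case b
      show ?thesis
      proof (cases "w < j")
        case True
        then have "{Inr (u, w), Inr (u, Suc w mod m)} \<in> CE n m j" using b unfolding CE_def by force
        then show ?thesis using b assms by auto
      next
        case False
        then have w: "w = Suc (j - 1)" using b assms by auto
        have "{Inr (u, j - 1), Inr (u, Suc (j - 1) mod m)} \<in> CE n m j" using b assms unfolding CE_def by force
        moreover have "Suc (j - 1) mod m = w" using w assms by auto
        ultimately show ?thesis using b assms by auto
      qed
    qed
  qed
qed

lemma card_sum_img: assumes "finite A" "finite B"
  shows "card (Inl ` A \<union> Inr ` B) = card A + card B"
  using card_Plus[OF assms] by (simp add: Plus_def)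

lemma main:
  assumes "n \<ge> 1" "m \<ge> 3" "1 \<le> j" "j < m" "1 \<le> s" "s \<le> Suc j" "p < n"
    and bal: "\<bar>int n * (4 * int j + 2 * int s + 2 - 3 * int m) + 2 * int p + 1\<bar> \<le> 1"
  shows "total_edge_product_cordial (corona (path_graph n) (cycle_graph m))"
proof -
  define V where "V = Inl ` {..<n} \<union> Inr ` ({..<n} \<times> {..<m})"
  define E where "E = PE (n-1) \<union> CE n m m \<union> SE n m"
  define Z where "Z = PE p \<union> CE n m j \<union> SE n s"
  define Zv where "Zv = Inl ` {..<n} \<union> Inr ` ({..<n} \<times> {..j})"
  define fs where "fs = (\<lambda>e. if e \<in> Z then 0 else (1::nat))"
  have G: "corona (path_graph n) (cycle_graph m) = (V, E)"
    using corona_V corona_E unfolding V_def E_def by (metis prod.collapse)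
  have fE: "finite E" unfolding E_def using finite_all by auto
  have pn: "p \<le> n - 1" using assms by auto
  have ZE: "Z \<subseteq> E" unfolding Z_def E_def using PE_mono[OF pn] CE_mono[of j m n m] SE_mono[of s m n] assms
    by auto
  have fl: "induced_vertex_label (V, E) fs v = (if \<exists>e\<in>Z. v \<in> e then 0 else 1)" for v
    unfolding fs_def using ivl[OF fE ZE] .
  have v0: "{v \<in> V. induced_vertex_label (V, E) fs v = 0} = Zv"
  proof -
    have "{v \<in> V. induced_vertex_label (V, E) fs v = 0} = {v \<in> V. \<exists>e\<in>Z. v \<in> e}"
      by (auto simp: fl)
    also have "\<dots> = Zv" using zero_vertices[OF assms(3-7)] unfolding V_def Zv_def Z_def .
    finally show ?thesis .
  qed
  have v1: "{v \<in> V. induced_vertex_label (V, E) fs v = 1} = V - Zv"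
    using v0 unfolding fl by (auto split: if_splits)
  have e0: "{e \<in> E. fs e = 0} = Z" using ZE unfolding fs_def by auto
  have e1: "{e \<in> E. fs e = 1} = E - Z" unfolding fs_def by auto
  have ZvV: "Zv \<subseteq> V" unfolding Zv_def V_def using assms by auto
  have cV: "card V = n + n * m"
    unfolding V_def by (simp add: card_sum_img card_cartesian_product)
  have cZv: "card Zv = n + n * Suc j"
    unfolding Zv_def by (simp add: card_sum_img card_cartesian_product)
  have cE: "card E = (n - 1) + n * m + n * m"
    unfolding E_def card3 card_PE card_SE card_CE[OF assms(2) order_refl] ..
  have cZ: "card Z = p + n * j + n * s"
    unfolding Z_def card3 card_PE card_SE using card_CE[OF assms(2)] assms by simp
  have cV1: "card (V - Zv) = card V - card Zv"
    using ZvV unfolding V_def by (simp add: card_Diff_subset finite_subset)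
  have cE1: "card (E - Z) = card E - card Z"
    using ZE fE by (simp add: card_Diff_subset finite_subset)
  have le1: "card Zv \<le> card V" using ZvV by (simp add: V_def card_mono)
  have le2: "card Z \<le> card E" using ZE fE by (simp add: card_mono)
  have eq: "(int (card Zv) + int (card Z)) - (int (card (V - Zv)) + int (card (E - Z)))
     = int n * (4 * int j + 2 * int s + 2 - 3 * int m) + 2 * int p + 1"
  proof -
    have "(int (card Zv) + int (card Z)) - (int (card (V - Zv)) + int (card (E - Z)))
       = 2 * int (card Zv) + 2 * int (card Z) - int (card V) - int (card E)"
      using le1 le2 cV1 cE1 by (simp add: of_nat_diff)
    also have "\<dots> = 2 * (int n + int n * (int j + 1)) + 2 * (int p + int n * int j + int n * int s)
        - (int n + int n * int m) - ((int n - 1) + int n * int m + int n * int m)"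
      using cV cZv cE cZ assms(1) by (simp add: of_nat_diff algebra_simps)
    also have "\<dots> = int n * (4 * int j + 2 * int s + 2 - 3 * int m) + 2 * int p + 1"
      by (simp add: algebra_simps)
    finally show ?thesis .
  qed
  have "total_edge_product_cordial_labeling (V, E) fs"
    unfolding total_edge_product_cordial_labeling_def Let_def
    using v0 v1 e0 e1 eq bal by (simp add: fs_def)
  then show ?thesis unfolding G total_edge_product_cordial_def by blast
qed

lemma params: fixes n m :: nat assumes "n \<ge> 1" "m \<ge> 3"
  shows "\<exists>j s p. 1 \<le> j \<and> j < m \<and> 1 \<le> s \<and> s \<le> Suc j \<and> p < n \<and>
     \<bar>int n * (4 * int j + 2 * int s + 2 - 3 * int m) + 2 * int p + 1\<bar> \<le> 1"
proof -
  define q where "q = m div 2"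
  define r where "r = m mod 2"
  have m: "m = 2 * q + r" unfolding q_def r_def by simp
  have r: "r \<le> 1" unfolding r_def by auto
  define a where "a = (q - 1) div 2"
  define b where "b = (q - 1) mod 2"
  have qa: "q - 1 = 2 * a + b" unfolding a_def b_def by simp
  have b: "b \<le> 1" unfolding b_def by auto
  have q1: "q \<ge> 1" using m r assms by linarith
  show ?thesis
  proof (cases "r = 0")
    case True
    then have q2: "q \<ge> 2" using m assms by linarith
    have c: "4 * int (3 * a + 2 * b) + 2 * int (2 - b) + 2 - 3 * int m = 0"
      using m True qa q2 b by (cases "b = 0") (auto simp: algebra_simps)
    show ?thesis
      apply (rule exI[of _ "3 * a + 2 * b"], rule exI[of _ "2 - b"], rule exI[of _ 0])
      using c m True qa q2 b assms by auto
  next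
    case False
    then have r1: "r = 1" using r by auto
    define p where "p = n div 2"
    have np: "n = 2 * p + n mod 2" "n mod 2 \<le> 1" unfolding p_def by auto
    have c: "4 * int (3 * a + 1 + b) + 2 * int (1 + b) + 2 - 3 * int m = -1"
      using m r1 qa q1 b by (cases "b = 0") (auto simp: algebra_simps)
    have bal: "\<bar>int n * (4 * int (3 * a + 1 + b) + 2 * int (1 + b) + 2 - 3 * int m) + 2 * int p + 1\<bar> \<le> 1"
      unfolding c using np by linarith
    show ?thesis
      apply (rule exI[of _ "3 * a + 1 + b"], rule exI[of _ "1 + b"], rule exI[of _ p])
      using bal m r1 qa q1 b assms np by auto
  qed
qed
theorem theorem3p2:
  fixes n m :: nat
  assumes "n \<ge> 1" and "m \<ge> 3"
  shows "total_edge_product_cordial (corona (path_graph n) (cycle_graph m))"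
proof -
  obtain j s p where h: "1 \<le> j" "j < m" "1 \<le> s" "s \<le> Suc j" "p < n"
    and bal: "\<bar>int n * (4 * int j + 2 * int s + 2 - 3 * int m) + 2 * int p + 1\<bar> \<le> 1"
    using params[OF assms] by blast
  show ?thesis using main[OF assms h bal] .
qed

end
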